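(* Let $I=[x_1,x_N]$ with partition $x_1<\dots<x_N$ and affine maps $u_i(x)=a_ix+b_i$ with $u_i(x_1)=x_i$, $u_i(x_N)=x_{i+1}$ ($i\in\mathbb{N}_{N-1}$). Let $f\in C(I)$ with $f\ge0$ on $I$, and let $\{q_n\}_{n\ge1}$ be a sequence in $(0,1]$ with $\lim q_n=1$. For $n\in\mathbb{N}$, $i\in\mathbb{N}_{N-1}$ set $\phi(f,i)=\min_{x\in I}f(u_i(x))$, $\Phi(f,i)=\max_{x\in I}f(u_i(x))$, $\phi_n=\min_{x\in I}M_{n,q_n}f(x)$, $\Phi_n=\max_{x\in I}M_{n,q_n}f(x)$, and let $C_n$ be a positive real number strictly larger than $\max\{\phi_n,\|f\|_\infty\}$. Suppose the continuous scaling functions $\alpha_i$ satisfy (1) $\|\alpha\|_\infty<1$ and (2) for all $n\in\mathbb{N}$, $i\in\mathbb{N}_{N-1}$, $x\in I$: \[ \max\left\{\frac{-\phi(f,i)}{C_n-\phi_n},\,-\frac{C_n-\Phi(f,i)}{\Phi_n}\right\}\le\alpha_i(x)\le\min\left\{\frac{\phi(f,i)}{\Phi_n},\,\frac{C_n-\Phi(f,i)}{C_n-\phi_n}\right\}. \] Then the quantum MKZ-fractal functions $f^{(q_n,\alpha)}_n$, $n\in\mathbb{N}$, are non-negative on $I$ and converge uniformly to $f$.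
   Context: For $q\in(0,1]$: $[k]_q=\frac{1-q^k}{1-q}$ ($q\ne1$), $[k]_1=k$, $q$-factorials and $\binom{n}{k}_q=\frac{[n]_q!}{[k]_q![n-k]_q!}$. Quantum MKZ operator: $M_{n,q}f(x)=P_{n,q}(x)\sum_{k\ge0}\binom{n+k}{k}_q\left(\frac{x-x_1}{x_N-x_1}\right)^k f\!\left(x_1+(x_N-x_1)\frac{[k]_q}{[k+n]_q}\right)$ for $x_1\le x<x_N$, $M_{n,q}f(x_N)=f(x_N)$, $P_{n,q}(x)=\prod_{j=0}^n(x_N-x_1-q^j(x-x_1))/(x_N-x_1)^{n+1}$. Scaling functions $\alpha_i\in C(I)$, $\|\alpha\|_\infty=\max_i\|\alpha_i\|_\infty$. The quantum MKZ-fractal function $f^{(q,\alpha)}_n$ is the unique $g\in C(I)$ with $g(u_i(x))=f(u_i(x))+\alpha_i(x)(g(x)-M_{n,q}f(x))$ for all $x\in I$, $i\in\mathbb{N}_{N-1}$. *)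

theory Defs
  imports "HOL-Analysis.Analysis"
begin

definition qint :: "real \<Rightarrow> nat \<Rightarrow> real" where
  "qint q k = (if q = 1 then real k else (1 - q ^ k) / (1 - q))"

definition qfact :: "real \<Rightarrow> nat \<Rightarrow> real" where
  "qfact q n = (\<Prod>k=1..n. qint q k)"

definition qbinom :: "real \<Rightarrow> nat \<Rightarrow> nat \<Rightarrow> real" where
  "qbinom q n k = qfact q n / (qfact q k * qfact q (n - k))"

definition mkz_P :: "real \<Rightarrow> real \<Rightarrow> nat \<Rightarrow> real \<Rightarrow> real \<Rightarrow> real" where
  "mkz_P x1 xN n q x =
     (\<Prod>j=0..n. (xN - x1 - q ^ j * (x - x1))) / (xN - x1) ^ (n + 1)"

definition mkz :: "real \<Rightarrow> real \<Rightarrow> nat \<Rightarrow> real \<Rightarrow> (real \<Rightarrow> real) \<Rightarrow> real \<Rightarrow> real" where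
  "mkz x1 xN n q f x =
     (if x = xN then f xN
      else mkz_P x1 xN n q x *
        (\<Sum>k. qbinom q (n + k) k * ((x - x1) / (xN - x1)) ^ k *
               f (x1 + (xN - x1) * qint q k / qint q (k + n))))"

definition mkz_fractal ::
  "(nat \<Rightarrow> real) \<Rightarrow> nat \<Rightarrow> (nat \<Rightarrow> real \<Rightarrow> real) \<Rightarrow> (nat \<Rightarrow> real \<Rightarrow> real)
   \<Rightarrow> nat \<Rightarrow> real \<Rightarrow> (real \<Rightarrow> real) \<Rightarrow> real \<Rightarrow> real" where
  "mkz_fractal xs N u \<alpha> n q f =
     (THE g. continuous_on {xs 1..xs N} g \<and> (\<forall>x. x \<notin> {xs 1..xs N} \<longrightarrow> g x = 0) \<and>
        (\<forall>x\<in>{xs 1..xs N}. \<forall>i\<in>{1..N-1}.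
           g (u i x) = f (u i x) + \<alpha> i x * (g x - mkz (xs 1) (xs N) n q f x)))"

definition sup_norm_on :: "real set \<Rightarrow> (real \<Rightarrow> real) \<Rightarrow> real" where
  "sup_norm_on I f = (SUP x\<in>I. \<bar>f x\<bar>)"

end

theory Submission
  imports Defs "HOL-Analysis.Analysis"
begin


lemma qint_sum: "qint q k = (\<Sum>i<k. q ^ i)"
  by (simp add: qint_def sum_gp_strict)

lemma qint_pos: "0 < q \<Longrightarrow> 1 \<le> k \<Longrightarrow> qint q k > 0"
proof -
  assume q: "0 < q" and k: "1 \<le> k"
  have "(\<Sum>i<k. q ^ i) \<ge> (\<Sum>i\<in>{0}. q ^ i)"
    by (rule sum_mono2) (use q k in auto)
  then show ?thesis using qint_sum[of q k] by simp
qed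

lemma qint_0[simp]: "qint q 0 = 0" by (simp add: qint_sum)

lemma qint_nonneg: "0 < q \<Longrightarrow> qint q k \<ge> 0"
  by (simp add: qint_sum sum_nonneg)

lemma qint_add: "qint q (a + b) = qint q a + q ^ a * qint q b"
  by (induction b) (simp_all add: qint_sum algebra_simps power_add)

lemma qfact_Suc: "qfact q (Suc m) = qfact q m * qint q (Suc m)"
  by (simp add: qfact_def)

lemma qfact_0[simp]: "qfact q 0 = 1"
  by (simp add: qfact_def)

lemma qfact_pos: "0 < q \<Longrightarrow> qfact q m > 0"
  by (induction m) (auto simp: qfact_Suc qint_pos)

lemma qbinom_diag: "0 < q \<Longrightarrow> qbinom q k k = 1"
  using qfact_pos[of q k] by (simp add: qbinom_def)

lemma qbinom_0: "0 < q \<Longrightarrow> qbinom q n 0 = 1"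
  using qfact_pos[of q n] by (simp add: qbinom_def)

lemma qbinom_pos: "0 < q \<Longrightarrow> qbinom q (n + k) k > 0"
  using qfact_pos[of q] by (simp add: qbinom_def)

lemma qbinom_pascal:
  assumes q: "0 < q"
  shows "qbinom q (Suc m + Suc k) (Suc k) =
         qbinom q (Suc m + k) k + q ^ Suc k * qbinom q (m + Suc k) (Suc k)"
proof -
  have id: "qint q (Suc (Suc (m + k))) = qint q (Suc k) + q ^ Suc k * qint q (Suc m)"
    using qint_add[of q "Suc k" "Suc m"] by (simp add: add.commute)
  have p1: "qfact q k > 0" "qfact q m > 0" "qfact q (Suc (m + k)) > 0"
    using qfact_pos q by auto
  have p2: "qint q (Suc k) > 0" "qint q (Suc m) > 0"
    using qint_pos q by auto
  have e1: "qbinom q (Suc m + Suc k) (Suc k) = qfact q (Suc (m + k)) * qint q (Suc (Suc (m + k)))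
      / (qfact q k * qint q (Suc k) * (qfact q m * qint q (Suc m)))"
    by (simp add: qbinom_def qfact_Suc)
  have e2: "qbinom q (Suc m + k) k = qfact q (Suc (m + k)) / (qfact q k * (qfact q m * qint q (Suc m)))"
    by (simp add: qbinom_def qfact_Suc)
  have e3: "qbinom q (m + Suc k) (Suc k) = qfact q (Suc (m + k)) / (qfact q k * qint q (Suc k) * qfact q m)"
    by (simp add: qbinom_def qfact_Suc)
  show ?thesis unfolding e1 e2 e3 id using p1 p2
    by (simp add: field_simps)
qed

lemma qbinom_cumul:
  assumes q: "0 < q"
  shows "qbinom q (Suc m + k) k = (\<Sum>i\<le>k. q ^ i * qbinom q (m + i) i)"
proof (induction k)
  case 0
  then show ?case using q by (simp add: qbinom_0 qbinom_diag)
next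
  case (Suc k)
  then show ?case using qbinom_pascal[OF q, of m k] by simp
qed

lemma qbinom_shift:
  assumes q: "0 < q"
  shows "qbinom q (n + Suc k) (Suc k) * (qint q (Suc k) / qint q (Suc k + n)) = qbinom q (n + k) k"
proof -
  have p1: "qfact q k > 0" "qfact q n > 0" "qfact q (n + k) > 0"
    using qfact_pos q by auto
  have p2: "qint q (Suc k) > 0" "qint q (Suc (n + k)) > 0"
    using qint_pos q by auto
  show ?thesis using p1 p2
    by (simp add: qbinom_def qfact_Suc field_simps)
qed

definition Pq :: "nat \<Rightarrow> real \<Rightarrow> real \<Rightarrow> real" where
  "Pq n q t = (\<Prod>j=0..n. (1 - q ^ j * t))"

lemma Pq_pos:
  assumes "0 < q" "q \<le> 1" "0 \<le> t" "t < 1"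
  shows "Pq n q t > 0"
  unfolding Pq_def
proof (rule prod_pos)
  fix j assume "j \<in> {0..n}"
  have "q ^ j \<le> 1" using assms by (simp add: power_le_one)
  then have "q ^ j * t \<le> t" using assms by (simp add: mult_left_le_one_le)
  then show "0 < 1 - q ^ j * t" using assms by simp
qed

lemma Pq_Suc: "Pq (Suc n) q t = (1 - t) * Pq n q (q * t)"
  unfolding Pq_def by (subst prod.atLeast0_atMost_Suc_shift) (simp add: mult_ac)

lemma gen_sums:
  assumes q: "0 < q" "q \<le> 1" and t: "0 \<le> t" "t < 1"
  shows "(\<lambda>k. qbinom q (n + k) k * t ^ k) sums (1 / Pq n q t)"
  using t
proof (induction n arbitrary: t)
  case 0
  have "(\<lambda>k. t ^ k) sums (1 / (1 - t))"
    using geometric_sums[of t] 0 by simp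
  then show ?case using q by (simp add: qbinom_diag Pq_def)
next
  case (Suc n)
  have qt: "0 \<le> q * t" "q * t < 1"
  proof -
    show "0 \<le> q * t" using Suc.prems q by simp
    have "q * t \<le> t" using Suc.prems q by (simp add: mult_left_le_one_le)
    then show "q * t < 1" using Suc.prems by simp
  qed
  have A: "(\<lambda>k. qbinom q (n + k) k * (q * t) ^ k) sums (1 / Pq n q (q * t))"
    using Suc.IH[OF qt] .
  have B: "(\<lambda>k. t ^ k) sums (1 / (1 - t))"
    using geometric_sums[of t] Suc.prems by simp
  have An: "summable (\<lambda>k. norm (qbinom q (n + k) k * (q * t) ^ k))"
  proof -
    have "(\<lambda>k. norm (qbinom q (n + k) k * (q * t) ^ k)) = (\<lambda>k. qbinom q (n + k) k * (q * t) ^ k)"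
      using qbinom_pos[OF q(1)] qt by (auto simp: abs_mult less_imp_le)
    then show ?thesis using sums_summable[OF A] by simp
  qed
  have Bn: "summable (\<lambda>k. norm (t ^ k))"
    using B Suc.prems by (simp add: sums_summable[OF B])
  have C: "(\<lambda>k. \<Sum>i\<le>k. (qbinom q (n + i) i * (q * t) ^ i) * t ^ (k - i)) sums
      ((\<Sum>k. qbinom q (n + k) k * (q * t) ^ k) * (\<Sum>k. t ^ k))"
    by (rule Cauchy_product_sums[OF An Bn])
  have eq: "(\<Sum>i\<le>k. (qbinom q (n + i) i * (q * t) ^ i) * t ^ (k - i)) = qbinom q (Suc n + k) k * t ^ k" for k
  proof -
    have "(\<Sum>i\<le>k. (qbinom q (n + i) i * (q * t) ^ i) * t ^ (k - i)) =
          (\<Sum>i\<le>k. (q ^ i * qbinom q (n + i) i) * t ^ k)"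
      by (rule sum.cong) (auto simp: power_mult_distrib power_add[symmetric])
    also have "\<dots> = qbinom q (Suc n + k) k * t ^ k"
      using qbinom_cumul[OF q(1), of n k] by (simp add: sum_distrib_right)
    finally show ?thesis .
  qed
  have "(\<Sum>k. qbinom q (n + k) k * (q * t) ^ k) * (\<Sum>k. t ^ k) = 1 / Pq (Suc n) q t"
    unfolding sums_unique[OF A, symmetric] sums_unique[OF B, symmetric] by (simp add: Pq_Suc)
  then show ?case using C eq by simp
qed

lemma qint_mono: "0 < q \<Longrightarrow> m \<le> k \<Longrightarrow> qint q m \<le> qint q k"
  unfolding qint_sum by (rule sum_mono2) auto

lemma qint_Suc: "qint q (Suc k) = qint q k + q ^ k"
  by (simp add: qint_sum)

definition xi :: "real \<Rightarrow> nat \<Rightarrow> nat \<Rightarrow> real" where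
  "xi q n k = qint q k / qint q (k + n)"

lemma xi_0[simp]: "xi q n 0 = 0" by (simp add: xi_def)

lemma xi_range:
  assumes "0 < q" "1 \<le> n"
  shows "0 \<le> xi q n k" "xi q n k \<le> 1"
proof -
  have "qint q (k + n) > 0" using qint_pos assms by simp
  moreover have "qint q k \<le> qint q (k + n)" "0 \<le> qint q k" using qint_mono qint_nonneg assms by auto
  ultimately show "0 \<le> xi q n k" "xi q n k \<le> 1" by (auto simp: xi_def)
qed

lemma xi_step:
  assumes q: "0 < q" and n: "1 \<le> n"
  shows "xi q n (Suc k) \<le> xi q n k + 1 / qint q n"
proof -
  define a where "a = qint q k"
  define c where "c = qint q n"
  define p where "p = q ^ k"
  define D0 where "D0 = qint q (k + n)"
  define D1 where "D1 = qint q (Suc k + n)"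
  have a0: "a \<ge> 0" unfolding a_def using qint_nonneg q by simp
  have c0: "c > 0" unfolding c_def using qint_pos q n by simp
  have p0: "p > 0" unfolding p_def using q by simp
  have D0e: "D0 = a + p * c" unfolding D0_def a_def p_def c_def by (rule qint_add)
  have D01: "D0 \<le> D1" unfolding D0_def D1_def using qint_mono q by simp
  have S: "qint q (Suc k) = a + p" unfolding a_def p_def by (rule qint_Suc)
  have D0p: "D0 > 0" using D0e a0 p0 c0 by (simp add: add_nonneg_pos)
  have "xi q n (Suc k) = (a + p) / D1" unfolding xi_def S D1_def ..
  also have "\<dots> \<le> (a + p) / D0"
    using D01 D0p a0 p0 by (intro divide_left_mono) auto
  also have "\<dots> = a / D0 + p / D0" by (simp add: add_divide_distrib)
  also have "p / D0 \<le> 1 / c"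
    using D0e a0 p0 c0 D0p by (simp add: field_simps)
  finally show ?thesis unfolding xi_def a_def D0_def c_def by simp
qed

lemma xi_shift:
  assumes "0 < q"
  shows "qbinom q (n + Suc k) (Suc k) * xi q n (Suc k) = qbinom q (n + k) k"
  using qbinom_shift[OF assms] by (simp add: xi_def)

context
  fixes q t :: real and n :: nat
  assumes q0: "0 < q" and q1: "q \<le> 1" and n1: "1 \<le> n" and t0: "0 \<le> t" and t1: "t < 1"
begin

lemma M0: "(\<lambda>k. qbinom q (n + k) k * t ^ k) sums (1 / Pq n q t)"
  by (rule gen_sums[OF q0 q1 t0 t1])

lemma beta_nonneg: "0 \<le> qbinom q (n + k) k * t ^ k"
  using qbinom_pos[OF q0, of n k] t0 by simp

lemma M1: "(\<lambda>k. qbinom q (n + k) k * t ^ k * xi q n k) sums (t / Pq n q t)"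
proof -
  have "(\<lambda>k. qbinom q (n + Suc k) (Suc k) * t ^ Suc k * xi q n (Suc k)) =
        (\<lambda>k. t * (qbinom q (n + k) k * t ^ k))"
    using xi_shift[OF q0, of n] by (auto simp: fun_eq_iff mult_ac)
  moreover have "(\<lambda>k. t * (qbinom q (n + k) k * t ^ k)) sums (t * (1 / Pq n q t))"
    by (rule sums_mult[OF M0])
  ultimately have "(\<lambda>k. qbinom q (n + Suc k) (Suc k) * t ^ Suc k * xi q n (Suc k)) sums (t / Pq n q t)"
    by simp
  then show ?thesis by (subst (asm) sums_Suc_iff) simp
qed

lemma M2_summable: "summable (\<lambda>k. qbinom q (n + k) k * t ^ k * (xi q n k)\<^sup>2)"
proof (rule summable_comparison_test'[OF sums_summable[OF M0]])
  fix k :: nat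
  have "0 \<le> xi q n k" "xi q n k \<le> 1" using xi_range[OF q0 n1] by auto
  then have "(xi q n k)\<^sup>2 \<le> 1" by (simp add: power_le_one)
  then show "norm (qbinom q (n + k) k * t ^ k * (xi q n k)\<^sup>2) \<le> qbinom q (n + k) k * t ^ k"
  proof -
    have "norm (qbinom q (n + k) k * t ^ k * (xi q n k)\<^sup>2) = qbinom q (n + k) k * t ^ k * (xi q n k)\<^sup>2"
      using beta_nonneg[of k] by simp
    also have "\<dots> \<le> qbinom q (n + k) k * t ^ k"
      using beta_nonneg[of k] \<open>(xi q n k)\<^sup>2 \<le> 1\<close> by (simp add: mult_left_le)
    finally show ?thesis .
  qed
qed

lemma M2_le1: "(\<Sum>k. qbinom q (n + k) k * t ^ k * (xi q n k)\<^sup>2) \<le> t / Pq n q t"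
proof -
  have "(\<Sum>k. qbinom q (n + k) k * t ^ k * (xi q n k)\<^sup>2) \<le> (\<Sum>k. qbinom q (n + k) k * t ^ k * xi q n k)"
  proof (rule suminf_le[OF _ M2_summable sums_summable[OF M1]])
    fix k
    have "0 \<le> xi q n k" "xi q n k \<le> 1" using xi_range[OF q0 n1] by auto
    then have "(xi q n k)\<^sup>2 \<le> xi q n k" by (simp add: power2_eq_square mult_left_le_one_le)
    then show "qbinom q (n + k) k * t ^ k * (xi q n k)\<^sup>2 \<le> qbinom q (n + k) k * t ^ k * xi q n k"
      using beta_nonneg[of k] by (simp add: mult_left_mono)
  qed
  then show ?thesis using sums_unique[OF M1] by simp
qed

lemma M2_le2: "(\<Sum>k. qbinom q (n + k) k * t ^ k * (xi q n k)\<^sup>2) \<le> t * (t / Pq n q t) + t * (1 / Pq n q t) / qint q n"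
proof -
  let ?b = "\<lambda>k. qbinom q (n + k) k * t ^ k"
  have sumS: "(\<lambda>k. ?b (Suc k) * (xi q n (Suc k))\<^sup>2) sums (\<Sum>k. ?b k * (xi q n k)\<^sup>2)"
    using summable_sums[OF M2_summable] by (subst sums_Suc_iff) simp
  have R: "(\<lambda>k. t * (?b k * xi q n k) + t * ?b k / qint q n) sums (t * (t / Pq n q t) + t * (1 / Pq n q t) / qint q n)"
    by (intro sums_add sums_mult sums_divide M1 M0)
  have "(\<Sum>k. ?b k * (xi q n k)\<^sup>2) \<le> t * (t / Pq n q t) + t * (1 / Pq n q t) / qint q n"
  proof (rule sums_le[OF _ sumS R])
    fix k
    have e: "?b (Suc k) * (xi q n (Suc k))\<^sup>2 = t * ?b k * xi q n (Suc k)"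
      using xi_shift[OF q0, of n k] by (simp add: power2_eq_square mult_ac)
    have "xi q n (Suc k) \<le> xi q n k + 1 / qint q n" by (rule xi_step[OF q0 n1])
    then have "t * ?b k * xi q n (Suc k) \<le> t * ?b k * (xi q n k + 1 / qint q n)"
      using beta_nonneg[of k] t0 by (intro mult_left_mono) auto
    then show "?b (Suc k) * (xi q n (Suc k))\<^sup>2 \<le> t * (?b k * xi q n k) + t * ?b k / qint q n"
      unfolding e by (simp add: algebra_simps)
  qed
  then show ?thesis .
qed

end


definition mk :: "nat \<Rightarrow> real \<Rightarrow> (real \<Rightarrow> real) \<Rightarrow> real \<Rightarrow> real" where
  "mk n q F t = Pq n q t * (\<Sum>k. qbinom q (n + k) k * t ^ k * F (xi q n k))"

lemma approx:
  assumes q0: "0 < q" and q1: "q \<le> 1" and n1: "1 \<le> n" and t0: "0 \<le> t" and t1: "t < 1"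
    and FB: "\<And>s. s \<in> {0..1} \<Longrightarrow> \<bar>F s\<bar> \<le> B"
    and d: "0 < \<delta>"
    and Fuc: "\<And>s r. s \<in> {0..1} \<Longrightarrow> r \<in> {0..1} \<Longrightarrow> \<bar>s - r\<bar> < \<delta> \<Longrightarrow> \<bar>F s - F r\<bar> \<le> \<epsilon>"
  shows "\<bar>mk n q F t - F t\<bar> \<le> \<epsilon> + (2 * B / \<delta>\<^sup>2) * min (1 / qint q n) (1 - t)"
proof -
  let ?b = "\<lambda>k. qbinom q (n + k) k * t ^ k"
  let ?x = "xi q n"
  define P where "P = Pq n q t"
  define c0 where "c0 = 2 * B / \<delta>\<^sup>2"
  define S2 where "S2 = (\<Sum>k. ?b k * (?x k)\<^sup>2)"
  define c where "c = qint q n"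
  have P0: "P > 0" unfolding P_def by (rule Pq_pos[OF q0 q1 t0 t1])
  have c_pos: "c > 0" unfolding c_def using qint_pos[OF q0 n1] .
  have B0: "B \<ge> 0" using FB[of 0] by auto
  have c00: "c0 \<ge> 0" unfolding c0_def using B0 by simp
  have tI: "t \<in> {0..1}" using t0 t1 by simp
  have xI: "?x k \<in> {0..1}" for k using xi_range[OF q0 n1] by auto
  have b0: "?b k \<ge> 0" for k by (rule beta_nonneg[OF q0 q1 n1 t0 t1])
  have M0': "?b sums (1 / P)" unfolding P_def by (rule M0[OF q0 q1 n1 t0 t1])
  have M1': "(\<lambda>k. ?b k * ?x k) sums (t / P)" unfolding P_def by (rule M1[OF q0 q1 n1 t0 t1])
  have M2': "(\<lambda>k. ?b k * (?x k)\<^sup>2) sums S2" unfolding S2_def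
    by (rule summable_sums[OF M2_summable[OF q0 q1 n1 t0 t1]])
  have S2a: "S2 \<le> t / P" unfolding S2_def P_def by (rule M2_le1[OF q0 q1 n1 t0 t1])
  have S2b: "S2 \<le> t * (t / P) + t * (1 / P) / c" unfolding S2_def P_def c_def by (rule M2_le2[OF q0 q1 n1 t0 t1])
  have pt: "\<bar>F s - F t\<bar> \<le> \<epsilon> + c0 * (s - t)\<^sup>2" if s: "s \<in> {0..1}" for s
  proof (cases "\<bar>s - t\<bar> < \<delta>")
    case True
    then have "\<bar>F s - F t\<bar> \<le> \<epsilon>" using Fuc[OF s tI] by simp
    moreover have "c0 * (s - t)\<^sup>2 \<ge> 0" using c00 by simp
    ultimately show ?thesis by linarith
  next
    case False
    then have "\<delta>\<^sup>2 \<le> (s - t)\<^sup>2"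
      using d by (metis abs_le_square_iff abs_of_pos not_less)
    then have "c0 * \<delta>\<^sup>2 \<le> c0 * (s - t)\<^sup>2" using c00 by (simp add: mult_left_mono)
    moreover have "c0 * \<delta>\<^sup>2 = 2 * B" unfolding c0_def using d by simp
    moreover have "\<bar>F s - F t\<bar> \<le> 2 * B" using FB[OF s] FB[OF tI] by linarith
    moreover have "\<epsilon> \<ge> 0" using Fuc[OF tI tI] d by simp
    ultimately show ?thesis by linarith
  qed
  have sumF: "summable (\<lambda>k. ?b k * F (?x k))"
  proof (rule summable_comparison_test'[OF summable_mult[OF sums_summable[OF M0'], of B]])
    fix k
    show "norm (?b k * F (?x k)) \<le> B * ?b k"
    proof -
      have "norm (?b k * F (?x k)) = ?b k * \<bar>F (?x k)\<bar>" using b0[of k] by (metis abs_mult abs_of_nonneg real_norm_def)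
      also have "\<dots> \<le> ?b k * B" using b0[of k] FB[OF xI[of k]] by (simp add: mult_left_mono)
      finally show ?thesis by (simp add: mult.commute)
    qed
  qed
  define SF where "SF = (\<Sum>k. ?b k * F (?x k))"
  have D: "(\<lambda>k. ?b k * F (?x k) - F t * ?b k) sums (SF - F t * (1 / P))"
    unfolding SF_def by (intro sums_diff summable_sums[OF sumF] sums_mult M0')
  have U: "(\<lambda>k. \<epsilon> * ?b k + c0 * (?b k * (?x k)\<^sup>2) - (2 * c0 * t) * (?b k * ?x k) + (c0 * t\<^sup>2) * ?b k)
      sums (\<epsilon> * (1 / P) + c0 * S2 - (2 * c0 * t) * (t / P) + (c0 * t\<^sup>2) * (1 / P))"
    by (intro sums_add sums_diff sums_mult M0' M1' M2')
  have tb: "\<bar>?b k * F (?x k) - F t * ?b k\<bar> \<le>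
      \<epsilon> * ?b k + c0 * (?b k * (?x k)\<^sup>2) - (2 * c0 * t) * (?b k * ?x k) + (c0 * t\<^sup>2) * ?b k" for k
  proof -
    have "\<bar>?b k * F (?x k) - F t * ?b k\<bar> = ?b k * \<bar>F (?x k) - F t\<bar>"
    proof -
      have "?b k * F (?x k) - F t * ?b k = ?b k * (F (?x k) - F t)" by (simp add: algebra_simps)
      then show ?thesis using b0[of k] by (metis abs_mult abs_of_nonneg)
    qed
    also have "\<dots> \<le> ?b k * (\<epsilon> + c0 * (?x k - t)\<^sup>2)"
      using b0[of k] pt[OF xI[of k]] by (simp add: mult_left_mono)
    also have "\<dots> = \<epsilon> * ?b k + c0 * (?b k * (?x k)\<^sup>2) - (2 * c0 * t) * (?b k * ?x k) + (c0 * t\<^sup>2) * ?b k"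
      by (simp add: power2_eq_square algebra_simps)
    finally show ?thesis .
  qed
  define RU where "RU = \<epsilon> * (1 / P) + c0 * S2 - (2 * c0 * t) * (t / P) + (c0 * t\<^sup>2) * (1 / P)"
  have le1: "SF - F t * (1 / P) \<le> RU"
    unfolding RU_def by (rule sums_le[OF _ D U]) (use tb abs_le_iff in blast)
  have U': "(\<lambda>k. - (\<epsilon> * ?b k + c0 * (?b k * (?x k)\<^sup>2) - (2 * c0 * t) * (?b k * ?x k) + (c0 * t\<^sup>2) * ?b k))
      sums (- RU)" unfolding RU_def by (rule sums_minus[OF U])
  have le2: "- RU \<le> SF - F t * (1 / P)"
    by (rule sums_le[OF _ U' D]) (use tb abs_le_iff in \<open>simp only: minus_le_iff[symmetric]; blast\<close>)
  have mkeq: "mk n q F t - F t = P * (SF - F t * (1 / P))"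
    unfolding mk_def P_def SF_def using P0 unfolding P_def by (simp add: algebra_simps)
  have "\<bar>mk n q F t - F t\<bar> \<le> P * RU"
    unfolding mkeq using le1 le2 P0 by (simp add: abs_mult abs_le_iff mult_left_mono)
  also have "P * RU = \<epsilon> + c0 * (P * S2 - t\<^sup>2)"
    unfolding RU_def using P0 by (simp add: field_simps power2_eq_square)
  also have "P * S2 - t\<^sup>2 \<le> min (1 / c) (1 - t)"
  proof -
    have "P * S2 \<le> t" using S2a P0 by (simp add: field_simps)
    moreover have "P * S2 \<le> t\<^sup>2 + t / c" using S2b P0 c_pos by (simp add: field_simps power2_eq_square)
    moreover have "t / c \<le> 1 / c" using t1 c_pos by (simp add: divide_right_mono)
    moreover have "t - t\<^sup>2 \<le> 1 - t" using zero_le_power2[of "1 - t"] by (simp add: power2_eq_square algebra_simps)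
    ultimately show ?thesis by simp
  qed
  then have "\<epsilon> + c0 * (P * S2 - t\<^sup>2) \<le> \<epsilon> + c0 * min (1 / c) (1 - t)"
    using c00 by (simp add: mult_left_mono)
  finally show ?thesis unfolding c0_def c_def .
qed

lemma cont_bound:
  fixes F :: "real \<Rightarrow> real"
  assumes "continuous_on {0..1::real} F"
  obtains B where "\<And>s. s \<in> {0..1} \<Longrightarrow> \<bar>F s\<bar> \<le> B"
proof -
  have "compact (F ` {0..1})" by (rule compact_continuous_image[OF assms]) simp
  then have "bounded (F ` {0..1})" by (rule compact_imp_bounded)
  then obtain B where "\<forall>x\<in>F ` {0..1}. norm x \<le> B" by (auto simp: bounded_iff)
  then show ?thesis by (intro that[of B]) auto
qed

lemma uc_data:
  fixes F :: "real \<Rightarrow> real"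
  assumes "continuous_on {0..1::real} F" "0 < e"
  obtains \<delta> where "0 < \<delta>" "\<And>s r. s \<in> {0..1} \<Longrightarrow> r \<in> {0..1} \<Longrightarrow> \<bar>s - r\<bar> < \<delta> \<Longrightarrow> \<bar>F s - F r\<bar> \<le> e"
proof -
  have "uniformly_continuous_on {0..1} F"
    by (rule compact_uniformly_continuous[OF assms(1)]) simp
  then obtain d where "d > 0" "\<forall>x\<in>{0..1}. \<forall>x'\<in>{0..1}. dist x' x < d \<longrightarrow> dist (F x') (F x) < e"
    using assms(2) unfolding uniformly_continuous_on_def by metis
  then show ?thesis using that[of d] by (force simp: dist_real_def)
qed

lemma sumF:
  assumes q0: "0 < q" and q1: "q \<le> 1" and n1: "1 \<le> n" and t0: "0 \<le> t" and t1: "t < 1"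
    and FB: "\<And>s. s \<in> {0..1} \<Longrightarrow> \<bar>F s\<bar> \<le> B"
  shows "summable (\<lambda>k. qbinom q (n + k) k * t ^ k * F (xi q n k))"
proof (rule summable_comparison_test'[OF summable_mult[OF sums_summable[OF M0[OF q0 q1 n1 t0 t1]], of B]])
  fix k
  have xI: "xi q n k \<in> {0..1}" using xi_range[OF q0 n1] by auto
  have b0: "0 \<le> qbinom q (n + k) k * t ^ k" by (rule beta_nonneg[OF q0 q1 n1 t0 t1])
  have "norm (qbinom q (n + k) k * t ^ k * F (xi q n k)) = (qbinom q (n + k) k * t ^ k) * \<bar>F (xi q n k)\<bar>"
    using b0 by (metis abs_mult abs_of_nonneg real_norm_def)
  also have "\<dots> \<le> (qbinom q (n + k) k * t ^ k) * B" using b0 FB[OF xI] by (simp add: mult_left_mono)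
  finally show "norm (qbinom q (n + k) k * t ^ k * F (xi q n k)) \<le> B * (qbinom q (n + k) k * t ^ k)"
    by (simp add: mult.commute)
qed

lemma mk_nonneg:
  assumes q0: "0 < q" and q1: "q \<le> 1" and n1: "1 \<le> n" and t0: "0 \<le> t" and t1: "t < 1"
    and FB: "\<And>s. s \<in> {0..1} \<Longrightarrow> \<bar>F s\<bar> \<le> B"
    and F0: "\<And>s. s \<in> {0..1} \<Longrightarrow> 0 \<le> F s"
  shows "0 \<le> mk n q F t"
proof -
  let ?b = "\<lambda>k. qbinom q (n + k) k * t ^ k"
  have xI: "xi q n k \<in> {0..1}" for k using xi_range[OF q0 n1] by auto
  have b0: "?b k \<ge> 0" for k by (rule beta_nonneg[OF q0 q1 n1 t0 t1])
  have "0 \<le> (\<Sum>k. ?b k * F (xi q n k))"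
    by (rule suminf_nonneg[OF sumF[OF q0 q1 n1 t0 t1 FB]]) (use b0 F0 xI in auto)
  then show ?thesis unfolding mk_def using Pq_pos[OF q0 q1 t0 t1, of n] by simp
qed

lemma mk_at0:
  assumes q0: "0 < q"
  shows "mk n q F 0 = F 0"
proof -
  have "Pq n q 0 = 1" by (simp add: Pq_def)
  moreover have "(\<Sum>k. qbinom q (n + k) k * 0 ^ k * F (xi q n k)) = F 0"
  proof -
    have "(\<Sum>k. qbinom q (n + k) k * 0 ^ k * F (xi q n k)) = (\<Sum>k\<in>{0}. qbinom q (n + k) k * 0 ^ k * F (xi q n k))"
      by (rule suminf_finite) auto
    then show ?thesis using qbinom_0[OF q0, of n] by simp
  qed
  ultimately show ?thesis by (simp add: mk_def)
qed

lemma mk_isCont: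
  assumes q0: "0 < q" and q1: "q \<le> 1" and n1: "1 \<le> n" and t0: "0 \<le> t" and t1: "t < 1"
    and FB: "\<And>s. s \<in> {0..1} \<Longrightarrow> \<bar>F s\<bar> \<le> B"
  shows "isCont (mk n q F) t"
proof -
  define K where "K = (1 + t) / 2"
  have K0: "0 \<le> K" "K < 1" "t < K" using t0 t1 by (auto simp: K_def)
  have xI: "xi q n k \<in> {0..1}" for k using xi_range[OF q0 n1] by auto
  have eq: "mk n q F = (\<lambda>t. Pq n q t * (\<Sum>k. (qbinom q (n + k) k * F (xi q n k)) * t ^ k))"
    by (auto simp: fun_eq_iff mk_def mult_ac)
  have sK: "summable (\<lambda>k. (qbinom q (n + k) k * F (xi q n k)) * K ^ k)"
  proof (rule summable_comparison_test'[OF summable_mult[OF sums_summable[OF M0[OF q0 q1 n1 K0(1) K0(2)]], of B]])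
    fix k
    have b0: "0 \<le> qbinom q (n + k) k * K ^ k" by (rule beta_nonneg[OF q0 q1 n1 K0(1) K0(2)])
    have "norm ((qbinom q (n + k) k * F (xi q n k)) * K ^ k) = (qbinom q (n + k) k * K ^ k) * \<bar>F (xi q n k)\<bar>"
    proof -
      have "(qbinom q (n + k) k * F (xi q n k)) * K ^ k = (qbinom q (n + k) k * K ^ k) * F (xi q n k)" by (simp add: mult_ac)
      then show ?thesis using b0 by (metis abs_mult abs_of_nonneg real_norm_def)
    qed
    also have "\<dots> \<le> (qbinom q (n + k) k * K ^ k) * B" using b0 FB[OF xI[of k]] by (simp add: mult_left_mono)
    finally show "norm ((qbinom q (n + k) k * F (xi q n k)) * K ^ k) \<le> B * (qbinom q (n + k) k * K ^ k)"
      by (simp add: mult.commute)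
  qed
  have c1: "isCont (\<lambda>t. \<Sum>k. (qbinom q (n + k) k * F (xi q n k)) * t ^ k) t"
    by (rule isCont_powser[OF sK]) (use K0 t0 in simp)
  have c2: "isCont (\<lambda>t. Pq n q t) t" unfolding Pq_def by (intro continuous_intros)
  show ?thesis unfolding eq by (intro isCont_mult c1 c2)
qed

definition Hf :: "nat \<Rightarrow> real \<Rightarrow> (real \<Rightarrow> real) \<Rightarrow> real \<Rightarrow> real" where
  "Hf n q F t = (if t = 1 then F 1 else mk n q F t)"

lemma Hf_cont:
  assumes q0: "0 < q" and q1: "q \<le> 1" and n1: "1 \<le> n"
    and Fc: "continuous_on {0..1} F"
  shows "continuous_on {0..1} (Hf n q F)"
proof -
  obtain B where FB: "\<And>s. s \<in> {0..1} \<Longrightarrow> \<bar>F s\<bar> \<le> B" using cont_bound[OF Fc] by blast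
  have B0: "0 \<le> B" using FB[of 0] by auto
  show ?thesis unfolding continuous_on_eq_continuous_within
  proof
    fix t :: real assume tI: "t \<in> {0..1}"
    show "continuous (at t within {0..1}) (Hf n q F)"
    proof (cases "t = 1")
      case False
      then have t0: "0 \<le> t" and t1: "t < 1" using tI by auto
      have "continuous (at t within {0..1}) (mk n q F)"
        by (rule continuous_at_imp_continuous_within[OF mk_isCont[OF q0 q1 n1 t0 t1 FB]])
      then show ?thesis
      proof (rule continuous_transform_within)
        show "0 < 1 - t" using t1 by simp
        show "t \<in> {0..1}" by fact
        fix x' assume "x' \<in> {0..1}" "dist x' t < 1 - t"
        then have "x' \<noteq> 1" by (auto simp: dist_real_def)
        then show "mk n q F x' = Hf n q F x'" by (simp add: Hf_def)
      qed
    next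
      case True
      show ?thesis unfolding True continuous_within_eps_delta
      proof (intro allI impI)
        fix e :: real assume e: "0 < e"
        obtain \<delta> where d: "0 < \<delta>" and dF: "\<And>s r. s \<in> {0..1} \<Longrightarrow> r \<in> {0..1} \<Longrightarrow> \<bar>s - r\<bar> < \<delta> \<Longrightarrow> \<bar>F s - F r\<bar> \<le> e / 3"
          using uc_data[OF Fc, of "e / 3"] e by auto
        define c0 where "c0 = 2 * B / \<delta>\<^sup>2"
        have c00: "0 \<le> c0" using B0 by (simp add: c0_def)
        define d where "d = min \<delta> (e / (3 * (c0 + 1)))"
        have d0: "0 < d" using d e c00 by (simp add: d_def)
        show "\<exists>d>0. \<forall>x'\<in>{0..1}. dist x' 1 < d \<longrightarrow> dist (Hf n q F x') (Hf n q F 1) < e"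
        proof (intro exI[of _ d] conjI ballI impI d0)
          fix x' :: real assume x': "x' \<in> {0..1}" "dist x' 1 < d"
          show "dist (Hf n q F x') (Hf n q F 1) < e"
          proof (cases "x' = 1")
            case True then show ?thesis using e by (simp add: Hf_def)
          next
            case False
            then have t0: "0 \<le> x'" and t1: "x' < 1" using x' by auto
            have ap: "\<bar>mk n q F x' - F x'\<bar> \<le> e / 3 + c0 * min (1 / qint q n) (1 - x')"
              unfolding c0_def by (rule approx[OF q0 q1 n1 t0 t1 FB d dF])
            have "c0 * min (1 / qint q n) (1 - x') \<le> c0 * (1 - x')"
              using c00 by (simp add: mult_left_mono)
            also have "\<dots> \<le> c0 * (e / (3 * (c0 + 1)))"
              using x' c00 by (intro mult_left_mono) (auto simp: dist_real_def d_def)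
            also have "\<dots> < e / 3"
              using c00 e by (simp add: field_simps)
            finally have A: "\<bar>mk n q F x' - F x'\<bar> < 2 * e / 3" using ap by simp
            have "\<bar>x' - 1\<bar> < \<delta>" using x' by (auto simp: dist_real_def d_def)
            then have Bb: "\<bar>F x' - F 1\<bar> \<le> e / 3" using dF x' by simp
            have "\<bar>mk n q F x' - F 1\<bar> \<le> \<bar>mk n q F x' - F x'\<bar> + \<bar>F x' - F 1\<bar>"
              using abs_triangle_ineq[of "mk n q F x' - F x'" "F x' - F 1"] by simp
            then show ?thesis using A Bb False by (simp add: Hf_def dist_real_def)
          qed
        qed
      qed
    qed
  qed
qed



lemma mkz_P_eq:
  fixes x1 xN :: real and f :: "real \<Rightarrow> real"
  assumes L: "x1 < xN"
  shows "mkz_P x1 xN n q x = Pq n q ((x - x1) / (xN - x1))"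
proof -
  let ?L = "xN - x1"
  have "(\<Prod>j=0..n. (?L - q ^ j * (x - x1))) = (\<Prod>j=0..n. ?L * (1 - q ^ j * ((x - x1) / ?L)))"
    using L by (intro prod.cong) (auto simp: field_simps)
  also have "\<dots> = ?L ^ (n + 1) * Pq n q ((x - x1) / ?L)"
    by (simp add: prod.distrib Pq_def)
  finally show ?thesis using L by (simp add: mkz_P_def)
qed

lemma mkz_eq:
  fixes x1 xN :: real and f :: "real \<Rightarrow> real"
  assumes L: "x1 < xN" and x: "x \<in> {x1..xN}"
  shows "mkz x1 xN n q f x = Hf n q (\<lambda>s. f (x1 + (xN - x1) * s)) ((x - x1) / (xN - x1))"
proof (cases "x = xN")
  case True
  then show ?thesis using L by (simp add: mkz_def Hf_def)
next
  case False
  then have "(x - x1) / (xN - x1) \<noteq> 1" using L by (simp add: divide_eq_1_iff)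
  then show ?thesis using False
    by (simp add: mkz_def Hf_def mk_def mkz_P_eq[OF L] xi_def times_divide_eq_right)
qed

lemma F_cont:
  fixes x1 xN :: real and f :: "real \<Rightarrow> real"
  assumes L: "x1 < xN" and fc: "continuous_on {x1..xN} f"
  shows "continuous_on {0..1} (\<lambda>s. f (x1 + (xN - x1) * s))"
proof (rule continuous_on_compose2[OF fc])
  show "continuous_on {0..1} (\<lambda>s. x1 + (xN - x1) * s)" by (intro continuous_intros)
  show "(\<lambda>s. x1 + (xN - x1) * s) ` {0..1} \<subseteq> {x1..xN}"
  proof
    fix y assume "y \<in> (\<lambda>s. x1 + (xN - x1) * s) ` {0..1}"
    then obtain s where s: "s \<in> {0..1}" "y = x1 + (xN - x1) * s" by auto
    have "(xN - x1) * s \<le> (xN - x1) * 1" using s L by (intro mult_left_mono) auto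
    moreover have "0 \<le> (xN - x1) * s" using s L by auto
    ultimately show "y \<in> {x1..xN}" using s by auto
  qed
qed

lemma t_in:
  fixes x1 xN :: real and f :: "real \<Rightarrow> real"
  assumes L: "x1 < xN" and x: "x \<in> {x1..xN}"
  shows "(x - x1) / (xN - x1) \<in> {0..1}"
  using L x by (auto intro!: divide_nonneg_nonneg simp: divide_le_eq_1)

lemma mkz_cont:
  fixes x1 xN :: real and f :: "real \<Rightarrow> real"
  assumes L: "x1 < xN" and fc: "continuous_on {x1..xN} f"
    and q0: "0 < q" and q1: "q \<le> 1" and n1: "1 \<le> n"
  shows "continuous_on {x1..xN} (mkz x1 xN n q f)"
proof -
  have "continuous_on {x1..xN} (\<lambda>x. Hf n q (\<lambda>s. f (x1 + (xN - x1) * s)) ((x - x1) / (xN - x1)))"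
  proof (rule continuous_on_compose2[OF Hf_cont[OF q0 q1 n1 F_cont[OF L fc]]])
    show "continuous_on {x1..xN} (\<lambda>x. (x - x1) / (xN - x1))" by (intro continuous_intros) (use L in auto)
    show "(\<lambda>x. (x - x1) / (xN - x1)) ` {x1..xN} \<subseteq> {0..1}" using t_in[OF L] by auto
  qed
  then show ?thesis by (rule continuous_on_eq) (simp add: mkz_eq[OF L])
qed

lemma mkz_x1:
  fixes x1 xN :: real and f :: "real \<Rightarrow> real"
  assumes L: "x1 < xN" and q0: "0 < q"
  shows "mkz x1 xN n q f x1 = f x1"
  using mkz_eq[OF L, of x1] L mk_at0[OF q0] by (simp add: Hf_def)

lemma mkz_nonneg:
  fixes x1 xN :: real and f :: "real \<Rightarrow> real"
  assumes L: "x1 < xN" and fc: "continuous_on {x1..xN} f"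
    and f0: "\<And>x. x \<in> {x1..xN} \<Longrightarrow> 0 \<le> f x"
    and q0: "0 < q" and q1: "q \<le> 1" and n1: "1 \<le> n" and x: "x \<in> {x1..xN}"
  shows "0 \<le> mkz x1 xN n q f x"
proof -
  let ?F = "\<lambda>s. f (x1 + (xN - x1) * s)"
  obtain B where FB: "\<And>s. s \<in> {0..1} \<Longrightarrow> \<bar>?F s\<bar> \<le> B" using cont_bound[OF F_cont[OF L fc]] by blast
  have F0: "0 \<le> ?F s" if "s \<in> {0..1}" for s
  proof -
    have "(xN - x1) * s \<le> (xN - x1) * 1" using that L by (intro mult_left_mono) auto
    moreover have "0 \<le> (xN - x1) * s" using that L by auto
    ultimately show ?thesis using f0 by auto
  qed
  show ?thesis
  proof (cases "x = xN")
    case True then show ?thesis using f0 x by (simp add: mkz_def)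
  next
    case False
    then have t: "0 \<le> (x - x1) / (xN - x1)" "(x - x1) / (xN - x1) < 1"
      using t_in[OF L x] L x by (auto simp: divide_less_eq_1)
    then show ?thesis using False mkz_eq[OF L x] mk_nonneg[OF q0 q1 n1 t FB F0] by (simp add: Hf_def)
  qed
qed

lemma mkz_approx:
  fixes x1 xN :: real and f :: "real \<Rightarrow> real"
  assumes L: "x1 < xN" and fc: "continuous_on {x1..xN} f" and e: "0 < e"
  obtains K where "\<And>n q x. 1 \<le> n \<Longrightarrow> 0 < q \<Longrightarrow> q \<le> 1 \<Longrightarrow> K \<le> qint q n \<Longrightarrow> x \<in> {x1..xN} \<Longrightarrow>
      \<bar>mkz x1 xN n q f x - f x\<bar> \<le> e"
proof -
  let ?F = "\<lambda>s. f (x1 + (xN - x1) * s)"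
  obtain B where FB: "\<And>s. s \<in> {0..1} \<Longrightarrow> \<bar>?F s\<bar> \<le> B" using cont_bound[OF F_cont[OF L fc]] by blast
  have B0: "0 \<le> B" using FB[of 0] by auto
  obtain \<delta> where d: "0 < \<delta>" and dF: "\<And>s r. s \<in> {0..1} \<Longrightarrow> r \<in> {0..1} \<Longrightarrow> \<bar>s - r\<bar> < \<delta> \<Longrightarrow> \<bar>?F s - ?F r\<bar> \<le> e / 2"
    using uc_data[OF F_cont[OF L fc], of "e / 2"] e by auto
  define c0 where "c0 = 2 * B / \<delta>\<^sup>2"
  have c00: "0 \<le> c0" using B0 by (simp add: c0_def)
  define K where "K = 2 * c0 / e + 1"
  have K0: "0 < K" using c00 e by (simp add: K_def add_nonneg_pos)
  show ?thesis
  proof (rule that[of K])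
    fix n q x assume n1: "1 \<le> n" and q0: "0 < q" and q1: "q \<le> 1" and Kq: "K \<le> qint q n" and x: "x \<in> {x1..xN}"
    show "\<bar>mkz x1 xN n q f x - f x\<bar> \<le> e"
    proof (cases "x = xN")
      case True then show ?thesis using e by (simp add: mkz_def)
    next
      case False
      define t where "t = (x - x1) / (xN - x1)"
      have t: "0 \<le> t" "t < 1"
        using t_in[OF L x] L x False by (auto simp: divide_less_eq_1 t_def)
      have Ft: "?F t = f x" using L by (simp add: t_def)
      have ap: "\<bar>mk n q ?F t - ?F t\<bar> \<le> e / 2 + c0 * min (1 / qint q n) (1 - t)"
        unfolding c0_def by (rule approx[OF q0 q1 n1 t FB d dF])
      have "c0 * min (1 / qint q n) (1 - t) \<le> c0 * (1 / K)"
        using c00 K0 Kq by (intro mult_left_mono) (auto simp: min_le_iff_disj intro!: divide_left_mono)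
      also have "\<dots> \<le> e / 2"
      proof -
        have "c0 * 2 \<le> e * K" using e c00 by (simp add: K_def field_simps)
        then show ?thesis using K0 e by (simp add: field_simps)
      qed
      finally have "\<bar>mk n q ?F t - ?F t\<bar> \<le> e" using ap by simp
      moreover have "mkz x1 xN n q f x = mk n q ?F t"
        using mkz_eq[OF L x] False L by (simp add: Hf_def t_def divide_eq_1_iff)
      ultimately show ?thesis using Ft by simp
    qed
  qed
qed



locale frac =
  fixes xs :: "nat \<Rightarrow> real" and N :: nat and \<alpha> :: "nat \<Rightarrow> real \<Rightarrow> real"
    and Mf f :: "real \<Rightarrow> real" and a :: real
  assumes N2: "N \<ge> 2"
    and part: "\<And>i. 1 \<le> i \<Longrightarrow> i < N \<Longrightarrow> xs i < xs (i + 1)"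
    and fc: "continuous_on {xs 1..xs N} f"
    and Mc: "continuous_on {xs 1..xs N} Mf"
    and M1: "Mf (xs 1) = f (xs 1)" and MN: "Mf (xs N) = f (xs N)"
    and \<alpha>c: "\<And>i. i \<in> {1..N-1} \<Longrightarrow> continuous_on {xs 1..xs N} (\<alpha> i)"
    and \<alpha>b: "\<And>i x. i \<in> {1..N-1} \<Longrightarrow> x \<in> {xs 1..xs N} \<Longrightarrow> \<bar>\<alpha> i x\<bar> \<le> a"
    and a1: "a < 1"
begin

lemma mono_xs: "1 \<le> i \<Longrightarrow> i < j \<Longrightarrow> j \<le> N \<Longrightarrow> xs i < xs j"
proof (induction j)
  case 0 then show ?case by simp
next
  case (Suc j)
  show ?case
  proof (cases "i = j")
    case True then show ?thesis using part Suc.prems by simp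
  next
    case False
    then have "xs i < xs j" using Suc by simp
    also have "xs j < xs (Suc j)" using part[of j] Suc.prems False by simp
    finally show ?thesis .
  qed
qed

lemma le_xs: "1 \<le> i \<Longrightarrow> i \<le> j \<Longrightarrow> j \<le> N \<Longrightarrow> xs i \<le> xs j"
  using mono_xs by (cases "i = j") (auto intro: less_imp_le)

lemma L_pos: "xs 1 < xs N"
  using mono_xs[of 1 N] N2 by simp

lemma piece_sub: "i \<in> {1..N-1} \<Longrightarrow> {xs i..xs (i+1)} \<subseteq> {xs 1..xs N}"
  using le_xs[of 1 i] le_xs[of "i+1" N] by auto

lemma cover_aux: "m \<ge> 1 \<Longrightarrow> m \<le> N - 1 \<Longrightarrow> xs 1 \<le> y \<Longrightarrow> y \<le> xs (m + 1) \<Longrightarrow> \<exists>i\<in>{1..m}. y \<in> {xs i..xs (i+1)}"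
proof (induction m)
  case 0 then show ?case by simp
next
  case (Suc m)
  show ?case
  proof (cases "m \<ge> 1 \<and> y \<le> xs (m + 1)")
    case True
    then obtain i where "i \<in> {1..m}" "y \<in> {xs i..xs (i+1)}" using Suc by auto
    then show ?thesis by auto
  next
    case False
    show ?thesis
    proof (cases "m = 0")
      case True then show ?thesis using Suc.prems by auto
    next
      case m0: False
      then have "\<not> y \<le> xs (m + 1)" using False by auto
      then show ?thesis using Suc.prems by (intro bexI[of _ "Suc m"]) auto
    qed
  qed
qed

lemma cover: "y \<in> {xs 1..xs N} \<Longrightarrow> \<exists>i\<in>{1..N-1}. y \<in> {xs i..xs (i+1)}"
  using cover_aux[of "N - 1" y] N2 by auto

definition w :: "nat \<Rightarrow> real \<Rightarrow> real" where
  "w i x = xs i + (x - xs 1) * (xs (i+1) - xs i) / (xs N - xs 1)"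

definition v :: "nat \<Rightarrow> real \<Rightarrow> real" where
  "v i y = xs 1 + (y - xs i) * (xs N - xs 1) / (xs (i+1) - xs i)"

lemma gap: "i \<in> {1..N-1} \<Longrightarrow> xs i < xs (i+1)"
  using part by auto

lemma v_w: assumes i: "i \<in> {1..N-1}" shows "v i (w i x) = x"
proof -
  have g: "xs (i+1) - xs i \<noteq> 0" using gap[OF i] by simp
  have L: "xs N - xs 1 \<noteq> 0" using L_pos by simp
  have "(x - xs 1) * (xs (i+1) - xs i) / (xs N - xs 1) * (xs N - xs 1) / (xs (i+1) - xs i) = x - xs 1"
    using g L by simp
  then show ?thesis by (simp add: v_def w_def)
qed

lemma w_v: assumes i: "i \<in> {1..N-1}" shows "w i (v i y) = y"
proof -
  have g: "xs (i+1) - xs i \<noteq> 0" using gap[OF i] by simp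
  have L: "xs N - xs 1 \<noteq> 0" using L_pos by simp
  have "(y - xs i) * (xs N - xs 1) / (xs (i+1) - xs i) * (xs (i+1) - xs i) / (xs N - xs 1) = y - xs i"
    using g L by simp
  then show ?thesis by (simp add: v_def w_def)
qed

lemma v_in: assumes i: "i \<in> {1..N-1}" and y: "y \<in> {xs i..xs (i+1)}" shows "v i y \<in> {xs 1..xs N}"
proof -
  have g: "xs i < xs (i+1)" by (rule gap[OF i])
  have L: "xs 1 < xs N" by (rule L_pos)
  have "0 \<le> (y - xs i) * (xs N - xs 1) / (xs (i+1) - xs i)"
    using g L y by (auto intro!: divide_nonneg_pos mult_nonneg_nonneg)
  moreover have "(y - xs i) * (xs N - xs 1) / (xs (i+1) - xs i) \<le> xs N - xs 1"
    using g L y by (simp add: divide_le_eq mult_left_mono mult.commute)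
  ultimately show ?thesis by (auto simp: v_def)
qed

lemma w_in: assumes i: "i \<in> {1..N-1}" and x: "x \<in> {xs 1..xs N}" shows "w i x \<in> {xs i..xs (i+1)}"
proof -
  have g: "xs i < xs (i+1)" by (rule gap[OF i])
  have L: "xs 1 < xs N" by (rule L_pos)
  have "0 \<le> (x - xs 1) * (xs (i+1) - xs i) / (xs N - xs 1)"
    using g L x by (auto intro!: divide_nonneg_pos mult_nonneg_nonneg)
  moreover have "(x - xs 1) * (xs (i+1) - xs i) / (xs N - xs 1) \<le> xs (i+1) - xs i"
    using g L x by (simp add: divide_le_eq mult_right_mono)
  ultimately show ?thesis by (auto simp: w_def)
qed

lemma w_inI: "i \<in> {1..N-1} \<Longrightarrow> x \<in> {xs 1..xs N} \<Longrightarrow> w i x \<in> {xs 1..xs N}"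
  using w_in piece_sub by blast

lemma a0: "0 \<le> a"
  using \<alpha>b[of 1 "xs 1"] N2 L_pos by force

definition E :: "(real \<Rightarrow> real) \<Rightarrow> nat \<Rightarrow> real \<Rightarrow> real" where
  "E g i y = f y + \<alpha> i (v i y) * (g (v i y) - Mf (v i y))"

definition T :: "(real \<Rightarrow> real) \<Rightarrow> real \<Rightarrow> real" where
  "T g y = E g (SOME i. i \<in> {1..N-1} \<and> y \<in> {xs i..xs (i+1)}) y"

definition ends :: "(real \<Rightarrow> real) \<Rightarrow> bool" where
  "ends g \<longleftrightarrow> g (xs 1) = f (xs 1) \<and> g (xs N) = f (xs N)"

lemma overlap:
  assumes ends: "ends g" and i: "i \<in> {1..N-1}" and j: "j \<in> {1..N-1}" and ij: "i < j"
    and yi: "y \<in> {xs i..xs (i+1)}" and yj: "y \<in> {xs j..xs (j+1)}"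
  shows "E g i y = f y" "E g j y = f y"
proof -
  have "xs (i+1) \<le> xs j" using le_xs[of "i+1" j] i j ij by auto
  then have y1: "y = xs (i+1)" and y2: "y = xs j" using yi yj by auto
  have "v i y = xs N" using gap[OF i] unfolding y1 v_def by simp
  then show "E g i y = f y" using ends MN by (simp add: E_def ends_def)
  have "v j y = xs 1" unfolding y2 v_def by simp
  then show "E g j y = f y" using ends M1 by (simp add: E_def ends_def)
qed

lemma T_eq:
  assumes ends: "ends g" and i: "i \<in> {1..N-1}" and y: "y \<in> {xs i..xs (i+1)}"
  shows "T g y = E g i y"
proof -
  define j where "j = (SOME i. i \<in> {1..N-1} \<and> y \<in> {xs i..xs (i+1)})"
  have j: "j \<in> {1..N-1} \<and> y \<in> {xs j..xs (j+1)}"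
    unfolding j_def by (rule someI[of _ i]) (use i y in auto)
  have "E g j y = E g i y"
  proof (cases i j rule: linorder_cases)
    case less then show ?thesis using overlap[OF ends i _ less y] j by auto
  next
    case equal then show ?thesis by simp
  next
    case greater then show ?thesis using overlap[OF ends _ i greater _ y] j by auto
  qed
  then show ?thesis unfolding T_def j_def[symmetric] .
qed

lemma T_w:
  assumes ends: "ends g" and i: "i \<in> {1..N-1}" and x: "x \<in> {xs 1..xs N}"
  shows "T g (w i x) = f (w i x) + \<alpha> i x * (g x - Mf x)"
  using T_eq[OF ends i w_in[OF i x]] v_w[OF i] by (simp add: E_def)

lemma T_ends: assumes ends: "ends g" shows "ends (T g)"
proof -
  have i1: "1 \<in> {1..N-1}" and iN: "N - 1 \<in> {1..N-1}" using N2 by auto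
  have "T g (xs 1) = E g 1 (xs 1)" using T_eq[OF ends i1] gap[OF i1] by simp
  also have "\<dots> = f (xs 1)" using ends M1 by (simp add: E_def v_def ends_def)
  finally have A: "T g (xs 1) = f (xs 1)" .
  have NN: "N - 1 + 1 = N" using N2 by simp
  have "T g (xs N) = E g (N - 1) (xs N)" using T_eq[OF ends iN] gap[OF iN] NN by simp
  also have "\<dots> = f (xs N)" using ends MN gap[OF iN] NN by (simp add: E_def v_def ends_def)
  finally show ?thesis using A by (simp add: ends_def)
qed

lemma T_cont:
  assumes ends: "ends g" and gc: "continuous_on {xs 1..xs N} g"
  shows "continuous_on {xs 1..xs N} (T g)"
proof -
  have U: "{xs 1..xs N} = (\<Union>i\<in>{1..N-1}. {xs i..xs (i+1)})"
    using cover piece_sub by blast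
  have "continuous_on (\<Union>i\<in>{1..N-1}. {xs i..xs (i+1)}) (T g)"
  proof (rule continuous_on_closed_Union)
    fix i assume i: "i \<in> {1..N-1}"
    have vc: "continuous_on {xs i..xs (i+1)} (v i)" unfolding v_def by (intro continuous_intros) (use gap[OF i] in auto)
    have vs: "v i ` {xs i..xs (i+1)} \<subseteq> {xs 1..xs N}" using v_in[OF i] by auto
    have "continuous_on {xs i..xs (i+1)} (E g i)"
      unfolding E_def
      by (intro continuous_intros continuous_on_subset[OF fc piece_sub[OF i]]
          continuous_on_compose2[OF \<alpha>c[OF i] vc vs] continuous_on_compose2[OF gc vc vs]
          continuous_on_compose2[OF Mc vc vs])
    then show "continuous_on {xs i..xs (i+1)} (T g)"
      by (rule continuous_on_eq) (use T_eq[OF ends i] in auto)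
  qed auto
  then show ?thesis using U by simp
qed

lemma decomp: "y \<in> {xs 1..xs N} \<Longrightarrow> \<exists>i\<in>{1..N-1}. \<exists>x\<in>{xs 1..xs N}. y = w i x"
proof -
  assume y: "y \<in> {xs 1..xs N}"
  then obtain i where i: "i \<in> {1..N-1}" "y \<in> {xs i..xs (i+1)}" using cover by blast
  then show ?thesis using v_in[OF i] w_v[OF i(1)] by metis
qed

definition eqn :: "(real \<Rightarrow> real) \<Rightarrow> bool" where
  "eqn g \<longleftrightarrow> (\<forall>x\<in>{xs 1..xs N}. \<forall>i\<in>{1..N-1}. g (w i x) = f (w i x) + \<alpha> i x * (g x - Mf x))"

lemma unique:
  assumes g1: "continuous_on {xs 1..xs N} g1" "eqn g1" and g2: "continuous_on {xs 1..xs N} g2" "eqn g2"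
  shows "\<forall>x\<in>{xs 1..xs N}. g1 x = g2 x"
proof -
  have "continuous_on {xs 1..xs N} (\<lambda>x. \<bar>g1 x - g2 x\<bar>)" by (intro continuous_intros g1 g2)
  then obtain z where z: "z \<in> {xs 1..xs N}" and zm: "\<And>y. y \<in> {xs 1..xs N} \<Longrightarrow> \<bar>g1 y - g2 y\<bar> \<le> \<bar>g1 z - g2 z\<bar>"
    using continuous_attains_sup[of "{xs 1..xs N}" "\<lambda>x. \<bar>g1 x - g2 x\<bar>"] L_pos by fastforce
  obtain i x where i: "i \<in> {1..N-1}" and x: "x \<in> {xs 1..xs N}" and zw: "z = w i x" using decomp[OF z] by blast
  have e1: "g1 (w i x) = f (w i x) + \<alpha> i x * (g1 x - Mf x)" using g1(2) i x unfolding eqn_def by blast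
  have e2: "g2 (w i x) = f (w i x) + \<alpha> i x * (g2 x - Mf x)" using g2(2) i x unfolding eqn_def by blast
  have "g1 z - g2 z = \<alpha> i x * (g1 x - g2 x)"
    unfolding zw e1 e2 by (simp add: algebra_simps)
  then have "\<bar>g1 z - g2 z\<bar> = \<bar>\<alpha> i x\<bar> * \<bar>g1 x - g2 x\<bar>" by (simp add: abs_mult)
  also have "\<dots> \<le> a * \<bar>g1 z - g2 z\<bar>"
    using \<alpha>b[OF i x] zm[OF x] a0 by (intro mult_mono) auto
  finally have "(1 - a) * \<bar>g1 z - g2 z\<bar> \<le> 0" by (simp add: algebra_simps)
  then have "\<bar>g1 z - g2 z\<bar> \<le> 0" using a1 by (simp add: mult_le_0_iff)
  then show ?thesis using zm by (metis abs_le_zero_iff abs_le_self_iff order.trans eq_iff_diff_eq_0)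
qed

lemma estimate:
  assumes g: "continuous_on {xs 1..xs N} g" "eqn g"
    and eta: "\<And>x. x \<in> {xs 1..xs N} \<Longrightarrow> \<bar>f x - Mf x\<bar> \<le> \<eta>"
  shows "\<forall>x\<in>{xs 1..xs N}. \<bar>g x - f x\<bar> \<le> a * \<eta> / (1 - a)"
proof -
  have "continuous_on {xs 1..xs N} (\<lambda>x. \<bar>g x - f x\<bar>)" by (intro continuous_intros g fc)
  then obtain z where z: "z \<in> {xs 1..xs N}" and zm: "\<And>y. y \<in> {xs 1..xs N} \<Longrightarrow> \<bar>g y - f y\<bar> \<le> \<bar>g z - f z\<bar>"
    using continuous_attains_sup[of "{xs 1..xs N}" "\<lambda>x. \<bar>g x - f x\<bar>"] L_pos by fastforce
  obtain i x where i: "i \<in> {1..N-1}" and x: "x \<in> {xs 1..xs N}" and zw: "z = w i x" using decomp[OF z] by blast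
  have e1: "g (w i x) = f (w i x) + \<alpha> i x * (g x - Mf x)" using g(2) i x unfolding eqn_def by blast
  have "g z - f z = \<alpha> i x * (g x - Mf x)"
    unfolding zw e1 by simp
  then have "\<bar>g z - f z\<bar> = \<bar>\<alpha> i x\<bar> * \<bar>g x - Mf x\<bar>" by (simp add: abs_mult)
  also have "\<dots> \<le> a * (\<bar>g z - f z\<bar> + \<eta>)"
  proof (rule mult_mono)
    show "\<bar>\<alpha> i x\<bar> \<le> a" by (rule \<alpha>b[OF i x])
    have "\<bar>g x - Mf x\<bar> \<le> \<bar>g x - f x\<bar> + \<bar>f x - Mf x\<bar>" using abs_triangle_ineq[of "g x - f x" "f x - Mf x"] by simp
    then show "\<bar>g x - Mf x\<bar> \<le> \<bar>g z - f z\<bar> + \<eta>" using zm[OF x] eta[OF x] by simp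
  qed (use a0 in auto)
  finally have "(1 - a) * \<bar>g z - f z\<bar> \<le> a * \<eta>" by (simp add: algebra_simps)
  then have "\<bar>g z - f z\<bar> \<le> a * \<eta> / (1 - a)" using a1 by (simp add: field_simps)
  then show ?thesis using zm by (meson order.trans)
qed

lemma exists:
  assumes inv: "\<And>i x z. i \<in> {1..N-1} \<Longrightarrow> x \<in> {xs 1..xs N} \<Longrightarrow> 0 \<le> z \<Longrightarrow> z \<le> C \<Longrightarrow>
        0 \<le> f (w i x) + \<alpha> i x * (z - Mf x) \<and> f (w i x) + \<alpha> i x * (z - Mf x) \<le> C"
    and fb: "\<And>x. x \<in> {xs 1..xs N} \<Longrightarrow> 0 \<le> f x \<and> f x \<le> C"
  shows "\<exists>g. continuous_on {xs 1..xs N} g \<and> (\<forall>x\<in>{xs 1..xs N}. 0 \<le> g x \<and> g x \<le> C) \<and> eqn g"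
proof -
  define good where "good g \<longleftrightarrow> continuous_on {xs 1..xs N} g \<and> ends g \<and> (\<forall>x\<in>{xs 1..xs N}. 0 \<le> g x \<and> g x \<le> C)" for g
  have Tgood: "good (T g)" if g: "good g" for g
  proof -
    have "0 \<le> T g y \<and> T g y \<le> C" if y: "y \<in> {xs 1..xs N}" for y
    proof -
      obtain i x where i: "i \<in> {1..N-1}" and x: "x \<in> {xs 1..xs N}" and yw: "y = w i x" using decomp[OF y] by blast
      have "T g y = f (w i x) + \<alpha> i x * (g x - Mf x)" unfolding yw using T_w[OF _ i x] g by (simp add: good_def)
      then show ?thesis using inv[OF i x, of "g x"] g x by (simp add: good_def)
    qed
    then show ?thesis using g T_cont T_ends by (simp add: good_def)
  qed
  define gs where "gs m = (T ^^ m) f" for m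
  have gs_good: "good (gs m)" for m
  proof (induction m)
    case 0 then show ?case using fc fb by (simp add: gs_def good_def ends_def)
  next
    case (Suc m) then show ?case using Tgood by (simp add: gs_def)
  qed
  have gsS: "gs (Suc m) = T (gs m)" for m by (simp add: gs_def)
  have diff: "\<forall>y\<in>{xs 1..xs N}. \<bar>gs (Suc m) y - gs m y\<bar> \<le> a ^ m * C" for m
  proof (induction m)
    case 0
    show ?case
    proof
      fix y assume y: "y \<in> {xs 1..xs N}"
      then show "\<bar>gs (Suc 0) y - gs 0 y\<bar> \<le> a ^ 0 * C" proof -
        have "0 \<le> gs 0 y \<and> gs 0 y \<le> C" "0 \<le> gs (Suc 0) y \<and> gs (Suc 0) y \<le> C"
          using gs_good[of 0] gs_good[of 1] y unfolding good_def by auto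
        then show ?thesis by (simp add: abs_le_iff)
      qed
    qed
  next
    case (Suc m)
    show ?case
    proof
      fix y assume y: "y \<in> {xs 1..xs N}"
      obtain i x where i: "i \<in> {1..N-1}" and x: "x \<in> {xs 1..xs N}" and yw: "y = w i x" using decomp[OF y] by blast
      have e1: "gs (Suc (Suc m)) y = f (w i x) + \<alpha> i x * (gs (Suc m) x - Mf x)"
        unfolding gsS[of "Suc m"] yw using T_w[OF _ i x] gs_good by (simp add: good_def)
      have e2: "gs (Suc m) y = f (w i x) + \<alpha> i x * (gs m x - Mf x)"
        unfolding gsS[of m] yw using T_w[OF _ i x] gs_good by (simp add: good_def)
      have "\<bar>gs (Suc (Suc m)) y - gs (Suc m) y\<bar> = \<bar>\<alpha> i x\<bar> * \<bar>gs (Suc m) x - gs m x\<bar>"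
        unfolding e1 e2 by (simp add: abs_mult[symmetric] algebra_simps)
      also have "\<dots> \<le> a * (a ^ m * C)"
        using \<alpha>b[OF i x] Suc.IH x a0 by (intro mult_mono) auto
      finally show "\<bar>gs (Suc (Suc m)) y - gs (Suc m) y\<bar> \<le> a ^ Suc m * C" by simp
    qed
  qed
  have summ: "summable (\<lambda>m. a ^ m * C)"
    using a0 a1 by (intro summable_mult2 summable_geometric) simp
  have ul0: "uniform_limit {xs 1..xs N} (\<lambda>m y. \<Sum>j<m. gs (Suc j) y - gs j y) (\<lambda>y. \<Sum>j. gs (Suc j) y - gs j y) sequentially"
    by (rule Weierstrass_m_test[OF _ summ]) (use diff in auto)
  define G where "G y = f y + (\<Sum>j. gs (Suc j) y - gs j y)" for y
  have ul1: "uniform_limit {xs 1..xs N} (\<lambda>m y. f y + (\<Sum>j<m. gs (Suc j) y - gs j y)) G sequentially"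
    unfolding G_def by (intro uniform_limit_add uniform_limit_const ul0)
  have tele: "(\<lambda>m y. f y + (\<Sum>j<m. gs (Suc j) y - gs j y)) = gs"
  proof (intro ext)
    fix m y
    have "(\<Sum>j<m. gs (Suc j) y - gs j y) = gs m y - gs 0 y" by (rule sum_lessThan_telescope)
    then show "f y + (\<Sum>j<m. gs (Suc j) y - gs j y) = gs m y" by (simp add: gs_def)
  qed
  have ul: "uniform_limit {xs 1..xs N} gs G sequentially" using ul1 unfolding tele .
  have Gc: "continuous_on {xs 1..xs N} G"
    by (rule uniform_limit_theorem[OF _ ul]) (use gs_good in \<open>auto simp: good_def\<close>)
  have pt: "(\<lambda>m. gs m y) \<longlonglongrightarrow> G y" if "y \<in> {xs 1..xs N}" for y
    using tendsto_uniform_limitI[OF ul that] .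
  have Gb: "0 \<le> G y \<and> G y \<le> C" if y: "y \<in> {xs 1..xs N}" for y
  proof
    show "0 \<le> G y" by (rule LIMSEQ_le_const[OF pt[OF y]]) (use gs_good y in \<open>auto simp: good_def\<close>)
    show "G y \<le> C" by (rule LIMSEQ_le_const2[OF pt[OF y]]) (use gs_good y in \<open>auto simp: good_def\<close>)
  qed
  have Ge: "eqn G" unfolding eqn_def
  proof (intro ballI)
    fix x i assume x: "x \<in> {xs 1..xs N}" and i: "i \<in> {1..N-1}"
    have e: "gs (Suc m) (w i x) = f (w i x) + \<alpha> i x * (gs m x - Mf x)" for m
      unfolding gsS using T_w[OF _ i x] gs_good by (simp add: good_def)
    have l1: "(\<lambda>m. gs (Suc m) (w i x)) \<longlonglongrightarrow> G (w i x)" by (rule LIMSEQ_Suc[OF pt[OF w_inI[OF i x]]])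
    have l2: "(\<lambda>m. f (w i x) + \<alpha> i x * (gs m x - Mf x)) \<longlonglongrightarrow> f (w i x) + \<alpha> i x * (G x - Mf x)"
      by (intro tendsto_intros pt[OF x])
    show "G (w i x) = f (w i x) + \<alpha> i x * (G x - Mf x)"
      using LIMSEQ_unique[OF l1] l2 unfolding e by blast
  qed
  show ?thesis using Gc Gb Ge by blast
qed

lemma the_fractal:
  fixes u :: "nat \<Rightarrow> real \<Rightarrow> real" and C :: real
  assumes inv0: "\<And>i x z. i \<in> {1..N-1} \<Longrightarrow> x \<in> {xs 1..xs N} \<Longrightarrow> 0 \<le> z \<Longrightarrow> z \<le> C \<Longrightarrow>
        0 \<le> f (u i x) + \<alpha> i x * (z - Mf x) \<and> f (u i x) + \<alpha> i x * (z - Mf x) \<le> C"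
    and fb: "\<And>x. x \<in> {xs 1..xs N} \<Longrightarrow> 0 \<le> f x \<and> f x \<le> C"
    and uw0: "\<And>i x. i \<in> {1..N-1} \<Longrightarrow> u i x = xs i + (x - xs 1) * (xs (i+1) - xs i) / (xs N - xs 1)"
  shows "(\<forall>x\<in>{xs 1..xs N}. 0 \<le> (THE g. continuous_on {xs 1..xs N} g \<and> (\<forall>x. x \<notin> {xs 1..xs N} \<longrightarrow> g x = 0) \<and>
        (\<forall>x\<in>{xs 1..xs N}. \<forall>i\<in>{1..N-1}. g (u i x) = f (u i x) + \<alpha> i x * (g x - Mf x))) x) \<and>
    (\<forall>\<eta>. (\<forall>x\<in>{xs 1..xs N}. \<bar>f x - Mf x\<bar> \<le> \<eta>) \<longrightarrow>
      (\<forall>x\<in>{xs 1..xs N}. \<bar>(THE g. continuous_on {xs 1..xs N} g \<and> (\<forall>x. x \<notin> {xs 1..xs N} \<longrightarrow> g x = 0) \<and>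
        (\<forall>x\<in>{xs 1..xs N}. \<forall>i\<in>{1..N-1}. g (u i x) = f (u i x) + \<alpha> i x * (g x - Mf x))) x - f x\<bar> \<le> a * \<eta> / (1 - a)))"
proof -
  let ?P = "\<lambda>g. continuous_on {xs 1..xs N} g \<and> (\<forall>x. x \<notin> {xs 1..xs N} \<longrightarrow> g x = 0) \<and>
        (\<forall>x\<in>{xs 1..xs N}. \<forall>i\<in>{1..N-1}. g (u i x) = f (u i x) + \<alpha> i x * (g x - Mf x))"
  have uw: "u i x = w i x" if "i \<in> {1..N-1}" for i x using uw0[OF that] by (simp add: w_def)
  have inv: "0 \<le> f (w i x) + \<alpha> i x * (z - Mf x) \<and> f (w i x) + \<alpha> i x * (z - Mf x) \<le> C"
    if "i \<in> {1..N-1}" "x \<in> {xs 1..xs N}" "0 \<le> z" "z \<le> C" for i x z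
    using inv0[OF that] uw[OF that(1)] by simp
  obtain G where Gc: "continuous_on {xs 1..xs N} G" and Gb: "\<forall>x\<in>{xs 1..xs N}. 0 \<le> G x \<and> G x \<le> C"
    and Ge: "eqn G" using exists[OF inv fb] by blast
  define g' where "g' x = (if x \<in> {xs 1..xs N} then G x else 0)" for x
  have g'c: "continuous_on {xs 1..xs N} g'"
    using Gc by (rule continuous_on_eq) (simp add: g'_def)
  have Pg': "?P g'"
  proof (intro conjI g'c allI impI ballI)
    fix x assume "x \<notin> {xs 1..xs N}" then show "g' x = 0" unfolding g'_def by auto
  next
    fix x i assume x: "x \<in> {xs 1..xs N}" and i: "i \<in> {1..N-1}"
    have "G (w i x) = f (w i x) + \<alpha> i x * (G x - Mf x)" using Ge x i unfolding eqn_def by blast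
    then show "g' (u i x) = f (u i x) + \<alpha> i x * (g' x - Mf x)"
      using uw[OF i] w_inI[OF i x] x by (simp add: g'_def)
  qed
  have uniq: "g = g'" if Pg: "?P g" for g
  proof
    fix y
    have ge: "eqn g" unfolding eqn_def using Pg uw by auto
    have "\<forall>x\<in>{xs 1..xs N}. g x = G x" by (rule unique) (use Pg Gc Ge ge in auto)
    then show "g y = g' y" using Pg by (auto simp: g'_def)
  qed
  have The: "(THE g. ?P g) = g'" by (rule the_equality[where P = ?P, OF Pg' uniq])
  show ?thesis unfolding The
  proof (intro conjI allI impI ballI)
    fix x assume "x \<in> {xs 1..xs N}" then show "0 \<le> g' x" using Gb by (simp add: g'_def)
  next
    fix \<eta> x assume h: "\<forall>x\<in>{xs 1..xs N}. \<bar>f x - Mf x\<bar> \<le> \<eta>" and x: "x \<in> {xs 1..xs N}"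
    have "\<forall>x\<in>{xs 1..xs N}. \<bar>G x - f x\<bar> \<le> a * \<eta> / (1 - a)"
      by (rule estimate[OF Gc Ge]) (use h in auto)
    then show "\<bar>g' x - f x\<bar> \<le> a * \<eta> / (1 - a)" using x by (simp add: g'_def)
  qed
qed

end


lemma arith_inv:
  fixes fy p P mx mn MX c al z :: real
  assumes "p \<le> fy" "fy \<le> P" "mn \<le> mx" "mx \<le> MX" "0 \<le> mx" "0 \<le> p" "mn < c" "0 \<le> z" "z \<le> c" "fy \<le> c"
    and lo: "max (- p / (c - mn)) (- ((c - P) / MX)) \<le> al"
    and hi: "al \<le> min (p / MX) ((c - P) / (c - mn))"
  shows "0 \<le> fy + al * (z - mx) \<and> fy + al * (z - mx) \<le> c"
proof -
  have cm: "c - mn > 0" using assms by simp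
  have lo1: "- p / (c - mn) \<le> al" and lo2: "- ((c - P) / MX) \<le> al" using lo by auto
  have hi1: "al \<le> p / MX" and hi2: "al \<le> (c - P) / (c - mn)" using hi by auto
  have r1: "al * (c - mn) \<le> c - P" using hi2 cm by (simp add: pos_le_divide_eq)
  have r2: "- p \<le> al * (c - mn)" using lo1 by (simp only: pos_divide_le_eq[OF cm])
  have zr: "z - mx \<le> c - mn" "- MX \<le> z - mx" using assms by auto
  show ?thesis
  proof (cases "MX = 0")
    case True
    then have "al = 0" using lo2 hi1 by simp
    then show ?thesis using assms by simp
  next
    case False
    then have MX: "MX > 0" using assms by simp
    have r3: "al * MX \<le> p" using hi1 MX by (simp add: pos_le_divide_eq)
    have lo2': "(- (c - P)) / MX \<le> al" using lo2 by (simp only: minus_divide_left)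
    have r4: "- (c - P) \<le> al * MX" using lo2' by (simp only: pos_divide_le_eq[OF MX])
    show ?thesis
    proof (cases "al \<ge> 0")
      case True
      have "al * (z - mx) \<ge> al * (- MX)" using True zr by (intro mult_left_mono) auto
      moreover have "al * (z - mx) \<le> al * (c - mn)" using True zr by (intro mult_left_mono) auto
      ultimately show ?thesis using r1 r3 assms by auto
    next
      case False
      have "al * (z - mx) \<ge> al * (c - mn)" using False zr by (intro mult_left_mono_neg) auto
      moreover have "al * (z - mx) \<le> al * (- MX)" using False zr by (intro mult_left_mono_neg) auto
      ultimately show ?thesis using r2 r4 assms by auto
    qed
  qed
qed

lemma qint_big:
  fixes K :: real
  assumes ql: "q \<longlonglongrightarrow> 1" and qr: "\<And>n. n \<ge> 1 \<Longrightarrow> 0 < q n \<and> q n \<le> 1"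
  shows "eventually (\<lambda>n. K \<le> qint (q n) n) sequentially"
proof -
  obtain m :: nat where m: "real m > K" using reals_Archimedean2 by blast
  have "(\<lambda>n. \<Sum>i<m. q n ^ i) \<longlonglongrightarrow> (\<Sum>i<m. 1 ^ i)"
    by (intro tendsto_intros ql)
  then have "(\<lambda>n. \<Sum>i<m. q n ^ i) \<longlonglongrightarrow> real m" by simp
  then have ev1: "eventually (\<lambda>n. K < (\<Sum>i<m. q n ^ i)) sequentially"
    using m by (rule order_tendstoD)
  have ev2: "eventually (\<lambda>n. n \<ge> max m 1) sequentially" by (rule eventually_ge_at_top)
  show ?thesis using ev1 ev2
  proof eventually_elim
    case (elim n)
    have q0: "0 < q n" using qr elim by auto
    have "(\<Sum>i<m. q n ^ i) \<le> (\<Sum>i<n. q n ^ i)"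
      by (rule sum_mono2) (use elim q0 in auto)
    then show ?case using elim qint_sum[of "q n" n] by simp
  qed
qed



lemma part_facts:
  fixes xs :: "nat \<Rightarrow> real"
  assumes N2: "N \<ge> 2" and part: "\<And>i. 1 \<le> i \<Longrightarrow> i < N \<Longrightarrow> xs i < xs (i + 1)"
  shows "xs 1 < xs N"
    and "\<And>i x. i \<in> {1..N-1} \<Longrightarrow> x \<in> {xs 1..xs N} \<Longrightarrow>
           xs i + (x - xs 1) * (xs (i+1) - xs i) / (xs N - xs 1) \<in> {xs 1..xs N}"
proof -
  interpret P: frac xs N "\<lambda>_ _. 0" "\<lambda>_. 0" "\<lambda>_. 0" 0
    by unfold_locales (use N2 part in auto)
  show "xs 1 < xs N" by (rule P.L_pos)
  show "\<And>i x. i \<in> {1..N-1} \<Longrightarrow> x \<in> {xs 1..xs N} \<Longrightarrow>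
           xs i + (x - xs 1) * (xs (i+1) - xs i) / (xs N - xs 1) \<in> {xs 1..xs N}"
    using P.w_inI unfolding P.w_def .
qed

lemma cont_bdd:
  fixes g :: "real \<Rightarrow> real"
  assumes "continuous_on {x1..xN} g"
  shows "bdd_above (g ` {x1..xN})" "bdd_below (g ` {x1..xN})"
proof -
  have "compact (g ` {x1..xN})" by (rule compact_continuous_image[OF assms]) simp
  then have "bounded (g ` {x1..xN})" by (rule compact_imp_bounded)
  then show "bdd_above (g ` {x1..xN})" "bdd_below (g ` {x1..xN})"
    by (auto simp: bounded_imp_bdd_above bounded_imp_bdd_below)
qed

theorem theorem4p1:
  fixes xs :: "nat \<Rightarrow> real" and N :: nat and a b :: "nat \<Rightarrow> real"
    and f :: "real \<Rightarrow> real" and q C :: "nat \<Rightarrow> real" and \<alpha> :: "nat \<Rightarrow> real \<Rightarrow> real"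
  defines "I \<equiv> {xs 1..xs N}"
  defines "u \<equiv> (\<lambda>i x. a i * x + b i)"
  defines "M \<equiv> (\<lambda>n. mkz (xs 1) (xs N) n (q n) f)"
  defines "\<phi> \<equiv> (\<lambda>i. INF x\<in>I. f (u i x))"
  defines "\<Phi> \<equiv> (\<lambda>i. SUP x\<in>I. f (u i x))"
  defines "\<phi>n \<equiv> (\<lambda>n. INF x\<in>I. M n x)"
  defines "\<Phi>n \<equiv> (\<lambda>n. SUP x\<in>I. M n x)"
  assumes N2: "N \<ge> 2"
    and part: "\<And>i. 1 \<le> i \<Longrightarrow> i < N \<Longrightarrow> xs i < xs (i + 1)"
    and u_left: "\<And>i. i \<in> {1..N-1} \<Longrightarrow> u i (xs 1) = xs i"
    and u_right: "\<And>i. i \<in> {1..N-1} \<Longrightarrow> u i (xs N) = xs (i + 1)"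
    and f_cont: "continuous_on I f"
    and f_nonneg: "\<And>x. x \<in> I \<Longrightarrow> f x \<ge> 0"
    and q_range: "\<And>n. n \<ge> 1 \<Longrightarrow> 0 < q n \<and> q n \<le> 1"
    and q_lim: "q \<longlonglongrightarrow> 1"
    and C_pos: "\<And>n. n \<ge> 1 \<Longrightarrow> C n > 0"
    and C_big: "\<And>n. n \<ge> 1 \<Longrightarrow> C n > max (\<phi>n n) (sup_norm_on I f)"
    and \<alpha>_cont: "\<And>i. i \<in> {1..N-1} \<Longrightarrow> continuous_on I (\<alpha> i)"
    and \<alpha>_norm: "Max ((\<lambda>i. sup_norm_on I (\<alpha> i)) ` {1..N-1}) < 1"
    and \<alpha>_lower: "\<And>n i x. n \<ge> 1 \<Longrightarrow> i \<in> {1..N-1} \<Longrightarrow> x \<in> I \<Longrightarrow>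
        max (- \<phi> i / (C n - \<phi>n n)) (- ((C n - \<Phi> i) / \<Phi>n n)) \<le> \<alpha> i x"
    and \<alpha>_upper: "\<And>n i x. n \<ge> 1 \<Longrightarrow> i \<in> {1..N-1} \<Longrightarrow> x \<in> I \<Longrightarrow>
        \<alpha> i x \<le> min (\<phi> i / \<Phi>n n) ((C n - \<Phi> i) / (C n - \<phi>n n))"
  shows "(\<forall>n\<ge>1. \<forall>x\<in>I. mkz_fractal xs N u \<alpha> n (q n) f x \<ge> 0) \<and>
         uniform_limit I (\<lambda>n. mkz_fractal xs N u \<alpha> n (q n) f) f sequentially"
proof -
  have L: "xs 1 < xs N" by (rule part_facts(1)[of N xs, OF N2 part])
  have Ine: "I \<noteq> {}" using L by (simp add: I_def)
  define A where "A = Max ((\<lambda>i. sup_norm_on I (\<alpha> i)) ` {1..N-1})"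
  have A1: "A < 1" using \<alpha>_norm by (simp add: A_def)
  have \<alpha>b: "\<bar>\<alpha> i x\<bar> \<le> A" if i: "i \<in> {1..N-1}" and x: "x \<in> I" for i x
  proof -
    have "continuous_on I (\<lambda>x. \<bar>\<alpha> i x\<bar>)" by (intro continuous_intros \<alpha>_cont[OF i])
    then have "bdd_above ((\<lambda>x. \<bar>\<alpha> i x\<bar>) ` I)" unfolding I_def by (rule cont_bdd)
    then have "\<bar>\<alpha> i x\<bar> \<le> sup_norm_on I (\<alpha> i)" unfolding sup_norm_on_def by (rule cSUP_upper[OF x])
    also have "\<dots> \<le> A" unfolding A_def by (rule Max_ge) (use i in auto)
    finally show ?thesis .
  qed
  have uform: "u i x = xs i + (x - xs 1) * (xs (i+1) - xs i) / (xs N - xs 1)" if i: "i \<in> {1..N-1}" for i x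
  proof -
    have e1: "a i * xs 1 + b i = xs i" using u_left[OF i] by (simp add: u_def)
    have e2: "a i * xs N + b i = xs (i + 1)" using u_right[OF i] by (simp add: u_def)
    have "a i * (xs N - xs 1) = xs (i+1) - xs i" using e1 e2 by (simp add: algebra_simps)
    then have ai: "a i = (xs (i+1) - xs i) / (xs N - xs 1)" using L by (simp add: field_simps)
    have "u i x = xs i + a i * (x - xs 1)" using e1 by (simp add: u_def algebra_simps)
    then show ?thesis unfolding ai by simp
  qed
  have uI: "u i x \<in> I" if "i \<in> {1..N-1}" "x \<in> I" for i x
    using part_facts(2)[of N xs, OF N2 part that(1), of x] that uform[OF that(1)] by (simp add: I_def)
  have fab: "bdd_above (f ` I)" "bdd_below (f ` I)" using cont_bdd[of "xs 1" "xs N" f] f_cont by (auto simp: I_def)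
  have fabs: "bdd_above ((\<lambda>x. \<bar>f x\<bar>) ` I)"
  proof -
    have "continuous_on {xs 1..xs N} (\<lambda>x. \<bar>f x\<bar>)" using f_cont unfolding I_def by (intro continuous_intros)
    then show ?thesis unfolding I_def by (rule cont_bdd)
  qed
  have fsup: "f x \<le> sup_norm_on I f" if "x \<in> I" for x
  proof -
    have "\<bar>f x\<bar> \<le> sup_norm_on I f" unfolding sup_norm_on_def by (rule cSUP_upper[OF that fabs])
    then show ?thesis by simp
  qed
  have uimg: "(\<lambda>x. f (u i x)) ` I \<subseteq> f ` I" if "i \<in> {1..N-1}" for i using uI[OF that] by auto
  have \<phi>le: "\<phi> i \<le> f (u i x)" if "i \<in> {1..N-1}" "x \<in> I" for i x
    unfolding \<phi>_def by (rule cINF_lower[OF bdd_below_mono[OF fab(2) uimg[OF that(1)]] that(2)])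
  have \<Phi>ge: "f (u i x) \<le> \<Phi> i" if "i \<in> {1..N-1}" "x \<in> I" for i x
    unfolding \<Phi>_def by (rule cSUP_upper[OF that(2) bdd_above_mono[OF fab(1) uimg[OF that(1)]]])
  have \<phi>0: "0 \<le> \<phi> i" if "i \<in> {1..N-1}" for i
    unfolding \<phi>_def by (rule cINF_greatest[OF Ine]) (use f_nonneg uI[OF that] in auto)
  have key: "(\<forall>x\<in>I. 0 \<le> mkz_fractal xs N u \<alpha> n (q n) f x) \<and>
      (\<forall>\<eta>. (\<forall>x\<in>I. \<bar>f x - M n x\<bar> \<le> \<eta>) \<longrightarrow> (\<forall>x\<in>I. \<bar>mkz_fractal xs N u \<alpha> n (q n) f x - f x\<bar> \<le> A * \<eta> / (1 - A)))"
    if n1: "n \<ge> 1" for n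
  proof -
    have q0: "0 < q n" and q1: "q n \<le> 1" using q_range[OF n1] by auto
    have Mc: "continuous_on I (M n)" unfolding M_def I_def
      by (rule mkz_cont[OF L _ q0 q1 n1]) (use f_cont I_def in simp)
    have M1: "M n (xs 1) = f (xs 1)" unfolding M_def by (rule mkz_x1[OF L q0])
    have MN: "M n (xs N) = f (xs N)" by (simp add: M_def mkz_def)
    have M0: "0 \<le> M n x" if "x \<in> I" for x unfolding M_def
      by (rule mkz_nonneg[OF L _ _ q0 q1 n1]) (use f_cont f_nonneg that in \<open>auto simp: I_def\<close>)
    have Mab: "bdd_above (M n ` I)" "bdd_below (M n ` I)" using cont_bdd[of "xs 1" "xs N" "M n"] Mc by (auto simp: I_def)
    have Mlo: "\<phi>n n \<le> M n x" if "x \<in> I" for x unfolding \<phi>n_def by (rule cINF_lower[OF Mab(2) that])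
    have Mhi: "M n x \<le> \<Phi>n n" if "x \<in> I" for x unfolding \<Phi>n_def by (rule cSUP_upper[OF that Mab(1)])
    have fr: "frac xs N \<alpha> (M n) f A"
      by unfold_locales (use N2 part f_cont Mc M1 MN \<alpha>_cont \<alpha>b A1 in \<open>auto simp: I_def\<close>)
    have inv: "0 \<le> f (u i x) + \<alpha> i x * (z - M n x) \<and> f (u i x) + \<alpha> i x * (z - M n x) \<le> C n"
      if i: "i \<in> {1..N-1}" and x: "x \<in> {xs 1..xs N}" and z: "0 \<le> z" "z \<le> C n" for i x z
    proof (rule arith_inv)
      have xI: "x \<in> I" using x by (simp add: I_def)
      show "\<phi> i \<le> f (u i x)" by (rule \<phi>le[OF i xI])
      show "f (u i x) \<le> \<Phi> i" by (rule \<Phi>ge[OF i xI])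
      show "\<phi>n n \<le> M n x" by (rule Mlo[OF xI])
      show "M n x \<le> \<Phi>n n" by (rule Mhi[OF xI])
      show "0 \<le> M n x" by (rule M0[OF xI])
      show "0 \<le> \<phi> i" by (rule \<phi>0[OF i])
      show "\<phi>n n < C n" using C_big[OF n1] by simp
      show "0 \<le> z" "z \<le> C n" by fact+
      show "f (u i x) \<le> C n" using fsup[OF uI[OF i xI]] C_big[OF n1] by simp
      show "max (- \<phi> i / (C n - \<phi>n n)) (- ((C n - \<Phi> i) / \<Phi>n n)) \<le> \<alpha> i x" by (rule \<alpha>_lower[OF n1 i xI])
      show "\<alpha> i x \<le> min (\<phi> i / \<Phi>n n) ((C n - \<Phi> i) / (C n - \<phi>n n))" by (rule \<alpha>_upper[OF n1 i xI])
    qed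
    have fb: "0 \<le> f x \<and> f x \<le> C n" if "x \<in> {xs 1..xs N}" for x
      using f_nonneg fsup C_big[OF n1] that by (fastforce simp: I_def)
    note R = frac.the_fractal[OF fr, where u=u and C="C n", OF inv fb uform]
    show ?thesis using R unfolding mkz_fractal_def M_def I_def by simp
  qed
  show ?thesis
  proof
    show "\<forall>n\<ge>1. \<forall>x\<in>I. mkz_fractal xs N u \<alpha> n (q n) f x \<ge> 0" using key by blast
  next
    show "uniform_limit I (\<lambda>n. mkz_fractal xs N u \<alpha> n (q n) f) f sequentially"
      unfolding uniform_limit_iff
    proof (intro allI impI)
      fix e :: real assume e: "0 < e"
      define \<eta> where "\<eta> = e * (1 - A) / 2"
      have \<eta>0: "0 < \<eta>" using e A1 by (simp add: \<eta>_def)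
      obtain K where K: "\<And>n q x. 1 \<le> n \<Longrightarrow> 0 < q \<Longrightarrow> q \<le> 1 \<Longrightarrow> K \<le> qint q n \<Longrightarrow> x \<in> {xs 1..xs N} \<Longrightarrow>
          \<bar>mkz (xs 1) (xs N) n q f x - f x\<bar> \<le> \<eta>"
        using mkz_approx[OF L _ \<eta>0] f_cont unfolding I_def by blast
      have ev: "eventually (\<lambda>n. K \<le> qint (q n) n \<and> n \<ge> 1) sequentially"
        by (intro eventually_conj qint_big[OF q_lim q_range] eventually_ge_at_top)
      show "\<forall>\<^sub>F n in sequentially. \<forall>x\<in>I. dist (mkz_fractal xs N u \<alpha> n (q n) f x) (f x) < e"
        using ev
      proof eventually_elim
        case (elim n)
        have n1: "n \<ge> 1" using elim by simp
        have "\<forall>x\<in>I. \<bar>f x - M n x\<bar> \<le> \<eta>"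
          using K[OF n1 _ _ _] q_range[OF n1] elim by (auto simp: M_def I_def abs_minus_commute)
        then have h: "\<forall>x\<in>I. \<bar>mkz_fractal xs N u \<alpha> n (q n) f x - f x\<bar> \<le> A * \<eta> / (1 - A)"
          using key[OF n1] by blast
        have "1 - A \<noteq> 0" using A1 by simp
        then have "A * \<eta> / (1 - A) = A * e / 2" by (simp add: \<eta>_def field_simps)
        also have "\<dots> < e" using A1 e by simp
        finally show ?case using h by (auto simp: dist_real_def)
      qed
    qed
  qed
qed


end
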